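(* There is an absolute constant $c$ such that the following holds. Let $0 < \epsilon < 4/5$, $z_1 = (\log\log x)^{1-\epsilon}$ and $z_2 = (\log\log x)^{1+\epsilon}$. Then for all sufficiently large $x$, $$\sum_{z_1 \le r \le z_2} A_r(x) \le c \frac{\epsilon x}{\log\log\log x},$$ the sum being over primes $r$.
   Context: For a positive integer $m$, $m'$ denotes the odd part of $m-1$. For a prime $r$, $A_r(x)$ denotes the number of odd integers $n \le x$ such that $\prod_{p \mid n} \gcd(n', p') = 1$ (product over primes $p$ dividing $n$) and the least prime dividing $n'$ is $r$. $\log$ is the natural logarithm. *)

theory Defs
  imports "HOL-Analysis.Analysis" "HOL-Computational_Algebra.Primes"
begin

text \<open>Odd part of a natural number (odd part of 0 is taken to be 0).\<close>
definition odd_part :: "nat \<Rightarrow> nat" where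
  "odd_part m = m div 2 ^ multiplicity (2::nat) m"

definition oddm1 :: "nat \<Rightarrow> nat" where
  "oddm1 m = odd_part (m - 1)"

definition least_prime_divisor_is :: "nat \<Rightarrow> nat \<Rightarrow> bool" where
  "least_prime_divisor_is r m \<longleftrightarrow>
     prime r \<and> r dvd m \<and> (\<forall>q. prime q \<and> q dvd m \<longrightarrow> r \<le> q)"

definition A :: "nat \<Rightarrow> real \<Rightarrow> nat" where
  "A r x = card {n::nat. 1 \<le> n \<and> real n \<le> x \<and> odd n \<and>
      (\<Prod>p\<in>prime_factors n. gcd (oddm1 n) (oddm1 p)) = 1 \<and>
      least_prime_divisor_is r (oddm1 n)}"

end

theory Submission
  imports Defs "HOL-Number_Theory.Totient" "HOL-Real_Asymp.Real_Asymp"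
begin



lemma primes_prod_dvd:
  assumes "finite P" "\<And>p. p \<in> P \<Longrightarrow> prime (p::nat) \<and> p dvd c"
  shows "(\<Prod>P) dvd c"
  using assms
proof (induction P rule: finite_induct)
  case empty then show ?case by simp
next
  case (insert x F)
  have cop: "coprime x (\<Prod>F)"
    by (rule prod_coprime_right) (use insert in \<open>auto intro: primes_coprime\<close>)
  show ?case using insert cop by (simp add: divides_mult)
qed

lemma choose_odd_le: "(2*m+1) choose m \<le> 4^m"
proof -
  have s: "(2*m+1) choose m = (2*m+1) choose (m+1)"
    using binomial_symmetric[of m "2*m+1"] by simp
  have "((2*m+1) choose m) + ((2*m+1) choose (m+1)) = (\<Sum>k\<in>{m,m+1}. (2*m+1) choose k)" by simp
  also have "\<dots> \<le> (\<Sum>k\<le>2*m+1. (2*m+1) choose k)"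
    by (rule sum_mono2) auto
  also have "\<dots> = 2^(2*m+1)" by (rule choose_row_sum)
  finally have "2 * ((2*m+1) choose m) \<le> 2 * 4^m" using s by (simp add: power_mult power_add)
  then show ?thesis by simp
qed

lemma primorial_le: "(\<Prod>p\<in>{p. prime p \<and> p \<le> n}. p) \<le> 4^n"
proof (induction n rule: less_induct)
  case (less n)
  show ?case
  proof (cases "n \<le> 2")
    case True
    then have "n = 0 \<or> n = 1 \<or> n = 2" by auto
    moreover have e01: "{p. prime p \<and> p \<le> 0} = ({}::nat set)" "{p. prime p \<and> p \<le> 1} = ({}::nat set)"
      by (auto simp: prime_nat_iff)
    moreover have e2: "{p. prime p \<and> p \<le> 2} = {2::nat}"
      using prime_ge_2_nat two_is_prime_nat by (auto intro: order.antisym)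
    ultimately show ?thesis
      proof (elim disjE)
      assume "n = 0" then show ?thesis by (simp only: e01) simp
    next
      assume "n = 1" then show ?thesis by (simp only: e01) simp
    next
      assume "n = 2" then show ?thesis by (simp only: e2) simp
    qed
  next
    case False
    show ?thesis
    proof (cases "even n")
      case True
      have np: "\<not> prime n" using True False prime_odd_nat[of n] by auto
      have "{p. prime p \<and> p \<le> n} = {p. prime p \<and> p \<le> n - 1}"
      proof -
        have "p \<le> n \<longleftrightarrow> p \<le> n-1" if "prime p" for p using that np by (cases "p = n") auto
        then show ?thesis by blast
      qed
      then have "(\<Prod>p\<in>{p. prime p \<and> p \<le> n}. p) \<le> 4^(n-1)" using less[of "n-1"] False by auto
      also have "\<dots> \<le> 4^n" by (rule power_increasing) auto
      finally show ?thesis .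
    next
      case odd: False
      then obtain m where n: "n = 2*m+1" by (metis oddE)
      with False have m: "m \<ge> 1" by auto
      have split: "{p. prime p \<and> p \<le> n} = {p. prime p \<and> p \<le> m+1} \<union> {p. prime p \<and> m+1 < p \<and> p \<le> n}" using n by auto
      have fin: "finite {p. prime p \<and> p \<le> m+1}" "finite {p. prime p \<and> m+1 < p \<and> p \<le> n}" by auto
      have "(\<Prod>p\<in>{p. prime p \<and> p \<le> n}. p) = (\<Prod>p\<in>{p. prime p \<and> p \<le> m+1}. p) * (\<Prod>p\<in>{p. prime p \<and> m+1 < p \<and> p \<le> n}. p)"
        unfolding split by (rule prod.union_disjoint[OF fin]) auto
      also have "\<dots> \<le> 4^(m+1) * 4^m"
      proof (rule mult_le_mono)
        show "(\<Prod>p\<in>{p. prime p \<and> p \<le> m+1}. p) \<le> 4^(m+1)" using less[of "m+1"] n m by auto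
        have "(\<Prod>p\<in>{p. prime p \<and> m+1 < p \<and> p \<le> n}. p) dvd ((2*m+1) choose m)"
        proof (rule primes_prod_dvd[OF fin(2)], safe)
          fix p assume p: "prime p" "m+1 < p" "p \<le> n"
          have "p dvd fact (2*m+1)" using p n prime_dvd_fact_iff[of p "2*m+1"] by presburger
          also have "fact (2*m+1) = fact m * fact (m+1) * ((2*m+1) choose m)"
            using binomial_fact_lemma[of m "2*m+1"] by (simp add: mult_ac)
          finally have "p dvd fact m * fact (m+1) * ((2*m+1) choose m)" .
          moreover have a1: "\<not> p dvd fact m" using p prime_dvd_fact_iff[of p m] by simp
          moreover have a2: "\<not> p dvd fact (m+1)" using p prime_dvd_fact_iff[of p "m+1"] by (simp del: fact_Suc)
          ultimately show "p dvd ((2*m+1) choose m)" using p(1) by (simp only: prime_dvd_mult_iff) blast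
        qed
        then have "(\<Prod>p\<in>{p. prime p \<and> m+1 < p \<and> p \<le> n}. p) \<le> ((2*m+1) choose m)"
          by (rule dvd_imp_le) (simp)
        then show "(\<Prod>p\<in>{p. prime p \<and> m+1 < p \<and> p \<le> n}. p) \<le> 4^m" using choose_odd_le[of m] by linarith
      qed
      also have "\<dots> = 4^n" using n by (simp add: power_add[symmetric])
      finally show ?thesis .
    qed
  qed
qed



lemma geom_le: fixes x :: real assumes "0 \<le> x" "x < 1"
  shows "(\<Sum>k\<le>N. x^k) \<le> 1 / (1 - x)"
proof -
  have "(\<Sum>k\<le>N. x^k) = (\<Sum>k<Suc N. x^k)" by (simp add: lessThan_Suc_atMost)
  also have "\<dots> = (1 - x^Suc N) / (1 - x)" using assms by (subst sum_gp_strict) auto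
  also have "\<dots> \<le> 1 / (1 - x)" using assms by (intro divide_right_mono) auto
  finally show ?thesis .
qed

lemma prod_mult_P:
  assumes "n > 0" "finite P" "prime_factors n \<subseteq> P" "\<And>p. p \<in> P \<Longrightarrow> prime p"
  shows "(\<Prod>p\<in>P. p ^ multiplicity p n) = (n::nat)"
proof -
  have "(\<Prod>p\<in>P. p ^ multiplicity p n) = (\<Prod>p\<in>prime_factors n. p ^ multiplicity p n)"
    using assms by (intro prod.mono_neutral_right) (auto simp: prime_factors_multiplicity)
  also have "\<dots> = n" using assms prime_factorization_nat[of n] by simp
  finally show ?thesis .
qed

lemma euler_prod_bound:
  assumes "N \<ge> 1"
  shows "(\<Prod>p\<in>{p. prime p \<and> p \<le> N}. (1 - 1/real p)) \<le> 1 / ln (real N + 1)"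
proof -
  define P where "P = {p. prime p \<and> p \<le> N}"
  have finP: "finite P" unfolding P_def by auto
  have pP: "p \<in> P \<Longrightarrow> prime p \<and> p \<le> N" for p unfolding P_def by auto
  define h where "h = (\<lambda>n. restrict (\<lambda>p. multiplicity p n) P)"
  have pf: "prime_factors n \<subseteq> P" if "n \<in> {1..N}" for n
  proof
    fix p assume p: "p \<in> prime_factors n"
    then have "prime p" "p dvd n" by auto
    then show "p \<in> P" using that dvd_imp_le[of p n] by (auto simp: P_def)
  qed
  have val: "(\<Prod>p\<in>P. (1/real p)^(h n p)) = 1 / real n" if "n \<in> {1..N}" for n
  proof -
    have "(\<Prod>p\<in>P. (1/real p)^(h n p)) = (\<Prod>p\<in>P. 1/ real (p ^ multiplicity p n))"
      by (intro prod.cong refl) (auto simp: h_def power_one_over)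
    also have "\<dots> = 1 / real (\<Prod>p\<in>P. p ^ multiplicity p n)"
      by (simp add: prod_dividef)
    also have "\<dots> = 1 / real n" using prod_mult_P[OF _ finP pf[OF that] ] pP that by simp
    finally show ?thesis .
  qed
  have inj: "inj_on h {1..N}"
  proof
    fix a b assume ab: "a \<in> {1..N}" "b \<in> {1..N}" "h a = h b"
    have "(\<Prod>p\<in>P. p ^ multiplicity p a) = (\<Prod>p\<in>P. p ^ multiplicity p b)"
    proof (intro prod.cong refl)
      fix p assume "p \<in> P"
      then have "h a p = multiplicity p a" "h b p = multiplicity p b" by (auto simp: h_def)
      then show "p ^ multiplicity p a = p ^ multiplicity p b" using ab by simp
    qed
    then show "a = b" using prod_mult_P[OF _ finP pf[OF ab(1)] ] prod_mult_P[OF _ finP pf[OF ab(2)] ] pP ab by simp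
  qed
  have himg: "h ` {1..N} \<subseteq> PiE P (\<lambda>_. {..N})"
  proof
    fix g assume "g \<in> h ` {1..N}"
    then obtain n where n: "n \<in> {1..N}" "g = h n" by auto
    have "multiplicity p n \<le> N" for p
    proof (cases "p > 1")
      case True
      have "p ^ multiplicity p n dvd n" by (rule multiplicity_dvd)
      then have "p ^ multiplicity p n \<le> n" using n by (intro dvd_imp_le) auto
      moreover have "multiplicity p n < p ^ multiplicity p n" 
        using less_exp[of "multiplicity p n"] power_mono[of 2 p "multiplicity p n"] True by linarith
      ultimately show ?thesis using n by auto
    next
      case False
      then have "p = 0 \<or> p = 1" by auto
      then show ?thesis by (auto simp: multiplicity_unit_left)
    qed
    then show "g \<in> PiE P (\<lambda>_. {..N})" using n by (auto simp: h_def)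
  qed
  have "ln (real N + 1) \<le> harm N" by (rule ln_le_harm)
  also have "harm N = (\<Sum>n\<in>{1..N}. 1 / real n)" by (simp add: harm_def divide_inverse)
  also have "\<dots> = (\<Sum>n\<in>{1..N}. \<Prod>p\<in>P. (1/real p)^(h n p))" by (intro sum.cong refl) (simp add: val)
  also have "\<dots> = (\<Sum>g\<in>h ` {1..N}. \<Prod>p\<in>P. (1/real p)^(g p))"
    by (rule sum.reindex[OF inj, symmetric, unfolded comp_def])
  also have "\<dots> \<le> (\<Sum>g\<in>PiE P (\<lambda>_. {..N}). \<Prod>p\<in>P. (1/real p)^(g p))"
    by (intro sum_mono2 himg finite_PiE finP) (auto intro: prod_nonneg)
  also have "\<dots> = (\<Prod>p\<in>P. \<Sum>k\<le>N. (1/real p)^k)"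
    by (rule prod_sum_PiE[symmetric]) (auto simp: finP)
  also have "\<dots> \<le> (\<Prod>p\<in>P. 1 / (1 - 1/real p))"
  proof (intro prod_mono conjI)
    fix p assume "p \<in> P"
    then have "p \<ge> 2" using pP prime_ge_2_nat by auto
    then show "0 \<le> (\<Sum>k\<le>N. (1/real p)^k)" "(\<Sum>k\<le>N. (1/real p)^k) \<le> 1 / (1 - 1/real p)"
      by (auto intro!: sum_nonneg geom_le)
  qed
  also have "\<dots> = 1 / (\<Prod>p\<in>P. (1 - 1/real p))" by (simp add: prod_dividef)
  finally have le: "ln (real N + 1) \<le> 1 / (\<Prod>p\<in>P. (1 - 1/real p))" .
  have pos: "(\<Prod>p\<in>P. (1 - 1/real p)) > 0"
  proof (intro prod_pos)
    fix p assume "p \<in> P"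
    then have "real p \<ge> 2" using pP prime_ge_2_nat by fastforce
    then show "0 < 1 - 1/real p" by (simp add: field_simps)
  qed
  have lnpos: "ln (real N + 1) > 0" using assms by auto
  from le pos lnpos show ?thesis unfolding P_def[symmetric]
    by (simp add: field_simps)
qed

lemma prime_block:
  fixes y :: real assumes y: "y \<ge> 2"
  shows "(\<Sum>p\<in>{p. prime p \<and> y \<le> real p \<and> real p < 2*y}. 1 / real p) \<le> 2 * ln 4 / ln y"
proof -
  define S where "S = {p. prime p \<and> y \<le> real p \<and> real p < 2*y}"
  define n where "n = nat \<lfloor>2*y\<rfloor>"
  have Ssub: "S \<subseteq> {p. prime p \<and> p \<le> n}" unfolding S_def n_def by (auto simp: le_nat_iff le_floor_iff)
  have finS: "finite S" by (rule finite_subset[OF Ssub]) auto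
  have pos: "p \<in> S \<Longrightarrow> real p \<ge> y" for p by (auto simp: S_def)
  have lny: "ln y > 0" using y by auto
  have "(\<Sum>p\<in>S. 1 / real p) \<le> (\<Sum>p\<in>S. 1 / y)"
  proof (intro sum_mono)
    fix p assume "p \<in> S"
    then have "y \<le> real p" by (rule pos)
    then show "1 / real p \<le> 1 / y" using y by (intro divide_left_mono) auto
  qed
  also have "\<dots> = card S / y" by simp
  finally have s1: "(\<Sum>p\<in>S. 1 / real p) \<le> card S / y" .
  have "card S * ln y = (\<Sum>p\<in>S. ln y)" by simp
  also have "\<dots> \<le> (\<Sum>p\<in>S. ln (real p))" using pos y by (intro sum_mono ln_mono) auto
  also have "\<dots> = ln (\<Prod>p\<in>S. real p)" using finS by (subst ln_prod) (auto simp: S_def prime_gt_0_nat)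
  also have "\<dots> = ln (real (\<Prod>p\<in>S. p))" by simp
  also have "\<dots> \<le> ln (real (\<Prod>p\<in>{p. prime p \<and> p \<le> n}. p))"
  proof -
    have "(\<Prod>p\<in>S. p) dvd (\<Prod>p\<in>{p. prime p \<and> p \<le> n}. p)"
      by (rule prod_dvd_prod_subset[OF _ Ssub]) auto
    then have "(\<Prod>p\<in>S. p) \<le> (\<Prod>p\<in>{p. prime p \<and> p \<le> n}. p)"
      by (rule dvd_imp_le) (auto intro: prod_pos simp: prime_gt_0_nat)
    moreover have "(\<Prod>p\<in>S. p) > 0" using S_def by (auto intro: prod_pos simp: prime_gt_0_nat)
    ultimately show ?thesis by (intro ln_mono) (simp_all del: of_nat_prod)
  qed
  also have "\<dots> \<le> ln (4 ^ n)"
  proof (intro ln_mono)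
    show "real (\<Prod>p\<in>{p. prime p \<and> p \<le> n}. p) \<le> 4 ^ n"
      using primorial_le[of n] by (simp del: of_nat_prod add: of_nat_le_iff[symmetric])
  qed (auto simp del: of_nat_prod intro: prod_pos simp: prime_gt_0_nat)
  also have "\<dots> = n * ln 4" by (simp add: ln_realpow)
  also have "\<dots> \<le> 2 * y * ln 4" unfolding n_def using y by (intro mult_right_mono) auto
  finally have "card S * ln y \<le> 2 * y * ln 4" .
  then have "card S / y \<le> 2 * ln 4 / ln y" using lny y by (simp add: field_simps)
  with s1 show ?thesis unfolding S_def by simp
qed



lemma odd_part_dvd: "odd_part m dvd m"
  unfolding odd_part_def using multiplicity_dvd[of "2::nat" m]
  by (metis dvd_div_mult_self dvd_triv_left)

lemma odd_part_eq: "m = 2 ^ multiplicity (2::nat) m * odd_part m"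
  unfolding odd_part_def using multiplicity_dvd[of "2::nat" m] by simp

lemma dvd_odd_part: assumes "odd q" "q dvd m" shows "q dvd odd_part m"
proof -
  have "coprime q (2 ^ multiplicity (2::nat) m)" using assms(1) by simp
  moreover have "q dvd 2 ^ multiplicity (2::nat) m * odd_part m" using assms(2) odd_part_eq[of m] by simp
  ultimately show ?thesis using coprime_dvd_mult_right_iff by blast
qed

lemma cop_shift: "coprime (k*M + a) M \<longleftrightarrow> coprime a (M::nat)"
  by (metis coprime_iff_gcd_eq_1 gcd.commute gcd_add_mult)

lemma count_coprime:
  assumes "M > (1::nat)"
  shows "card {b. b < k*M \<and> coprime b M} = k * totient M"
proof (induction k)
  case 0 then show ?case by simp
next
  case (Suc k)
  have base: "{a. a < M \<and> coprime a M} = totatives M"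
  proof -
    have a0: "0 < a" if "coprime a M" for a using that assms by (cases "a = 0") auto
    have aM: "a \<noteq> M" if "coprime a M" for a using that assms by auto
    show ?thesis using a0 aM by (fastforce simp: totatives_def le_less)
  qed
  have eq: "{b. b < Suc k*M \<and> coprime b M} = {b. b < k*M \<and> coprime b M} \<union> (\<lambda>a. k*M + a) ` {a. a < M \<and> coprime a M}"
  proof (intro set_eqI iffI)
    fix b assume b: "b \<in> {b. b < Suc k*M \<and> coprime b M}"
    show "b \<in> {b. b < k*M \<and> coprime b M} \<union> (\<lambda>a. k*M + a) ` {a. a < M \<and> coprime a M}"
    proof (cases "b < k*M")
      case True then show ?thesis using b by auto
    next
      case False
      then have "b = k*M + (b - k*M)" "b - k*M < M" using b by auto
      moreover have "coprime (b - k*M) M" using b False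
        using cop_shift[of k M "b - k*M"] by (metis (no_types, lifting) \<open>b = k*M + (b - k*M)\<close> mem_Collect_eq)
      ultimately show ?thesis by blast
    qed
  next
    fix b assume "b \<in> {b. b < k*M \<and> coprime b M} \<union> (\<lambda>a. k*M + a) ` {a. a < M \<and> coprime a M}"
    then show "b \<in> {b. b < Suc k*M \<and> coprime b M}"
      by (auto simp: cop_shift)
  qed
  have "card {b. b < Suc k*M \<and> coprime b M} = card {b. b < k*M \<and> coprime b M} + card ((\<lambda>a. k*M + a) ` {a. a < M \<and> coprime a M})"
    unfolding eq by (rule card_Un_disjoint) auto
  also have "card ((\<lambda>a. k*M + a) ` {a. a < M \<and> coprime a M}) = card {a. a < M \<and> coprime a M}"
    by (rule card_image) (auto simp: inj_on_def)
  also have "\<dots> = totient M" by (simp add: base totient_def)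
  finally show ?case using Suc by simp
qed

lemma coprime_prod_primes:
  assumes "finite Q" "\<And>q. q \<in> Q \<Longrightarrow> prime q \<and> \<not> q dvd b"
  shows "coprime b (\<Prod>Q :: nat)"
  using assms by (intro prod_coprime_right) (auto simp: prime_imp_coprime coprime_commute)

lemma A_bound:
  fixes r M :: nat and x :: real
  assumes r: "prime r" "r \<ge> 3" and Q: "finite Q" "\<And>q. q \<in> Q \<Longrightarrow> prime q \<and> odd q \<and> q < r"
    and M: "M = \<Prod>Q" "M > 1" and x: "x \<ge> 0"
  shows "real (A r x) \<le> x / (2*r) * (totient M / M) + totient M"
proof -
  define B where "B = nat \<lfloor>x / (2*r)\<rfloor>"
  define K where "K = B div M + 1"
  define T where "T = {n::nat. 1 \<le> n \<and> real n \<le> x \<and> odd n \<and>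
      (\<Prod>p\<in>prime_factors n. gcd (oddm1 n) (oddm1 p)) = 1 \<and>
      least_prime_divisor_is r (oddm1 n)}"
  have AT: "A r x = card T" unfolding A_def T_def by simp
  have sub: "T \<subseteq> (\<lambda>b. 1 + 2*r*b) ` {b. b < K*M \<and> coprime b M}"
  proof
    fix n assume n: "n \<in> T"
    define m where "m = n - 1"
    have n1: "n = m + 1" "odd n" "real n \<le> x" using n by (auto simp: T_def m_def)
    have lp: "least_prime_divisor_is r (odd_part m)" using n by (simp add: T_def oddm1_def m_def)
    then have "r dvd odd_part m" by (simp add: least_prime_divisor_is_def)
    then have rm: "r dvd m" using odd_part_dvd dvd_trans by blast
    have "2 dvd m" using n1 by simp
    moreover have "odd r" using r prime_odd_nat by auto
    ultimately have "2*r dvd m" using rm by (simp add: divides_mult)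
    then obtain b where b: "m = 2*r*b" by auto
    have "real (2*r*b) \<le> x" using n1 b by simp
    then have "real b \<le> x / (2*r)" using r by (simp add: field_simps)
    then have "b \<le> B" unfolding B_def by (simp add: le_nat_iff le_floor_iff)
    also have "B < K * M" unfolding K_def using M by (metis div_mult_mod_eq add_mult_distrib mod_less_divisor nat_add_left_cancel_less zero_less_iff_neq_zero mult_1 not_one_less_zero linorder_neqE_nat less_trans zero_less_one)
    finally have bK: "b < K*M" .
    have "coprime b M" unfolding M
    proof (rule coprime_prod_primes[OF Q(1)])
      fix q assume q: "q \<in> Q"
      show "prime q \<and> \<not> q dvd b"
      proof (intro conjI notI)
        show "prime q" using Q q by auto
        assume "q dvd b"
        then have "q dvd m" using b by simp
        then have "q dvd odd_part m" using Q q by (intro dvd_odd_part) auto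
        then have "r \<le> q" using lp Q q by (auto simp: least_prime_divisor_is_def)
        then show False using Q(2)[OF q] by simp
      qed
    qed
    then show "n \<in> (\<lambda>b. 1 + 2*r*b) ` {b. b < K*M \<and> coprime b M}" using bK b n1 by auto
  qed
  have "card T \<le> card ((\<lambda>b. 1 + 2*r*b) ` {b. b < K*M \<and> coprime b M})"
    by (rule card_mono[OF _ sub]) auto
  also have "\<dots> \<le> card {b. b < K*M \<and> coprime b M}" by (rule card_image_le) auto
  also have "\<dots> = K * totient M" using M by (intro count_coprime) auto
  finally have cT: "real (card T) \<le> real K * totient M" by (simp flip: of_nat_mult)
  have "real (B div M) \<le> real B / M" by (rule of_nat_div_le_of_nat)
  then have k1: "real K \<le> real B / M + 1" unfolding K_def by simp
  have hB: "real B \<le> x / (2*r)" unfolding B_def using x r by simp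
  have "real B / M \<le> x / (2*r) / M" using hB by (rule divide_right_mono) simp
  then have "real K \<le> x / (2*r) / M + 1" using k1 by linarith
  then have "real K * totient M \<le> (x / (2*r) / M + 1) * totient M" by (rule mult_right_mono) simp
  also have "\<dots> = x / (2*r) * (totient M / M) + totient M" by (simp add: field_simps)
  finally show ?thesis using cT AT by simp
qed



lemma prime_range_sum:
  fixes z1 z2 :: real assumes z: "z1 \<ge> 2" "z1 \<le> z2"
  shows "(\<Sum>p\<in>{p. prime p \<and> z1 \<le> real p \<and> real p \<le> z2}. 1 / real p)
         \<le> 2 * ln 4 / ln z1 * (log 2 (z2 / z1) + 1)"
proof -
  define R where "R = {p. prime p \<and> z1 \<le> real p \<and> real p \<le> z2}"
  define j where "j = (\<lambda>p::nat. nat \<lfloor>log 2 (real p / z1)\<rfloor>)"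
  define J where "J = nat \<lfloor>log 2 (z2 / z1)\<rfloor>"
  have finR: "finite R" unfolding R_def
    by (rule finite_subset[of _ "{..nat \<lceil>z2\<rceil>}"]) (auto simp: le_nat_iff le_ceiling_iff)
  have z1pos: "z1 > 0" using z by auto
  have blk: "z1 * 2 ^ j p \<le> real p \<and> real p < 2 * (z1 * 2 ^ j p)" if "p \<in> R" for p
  proof -
    have p1: "real p / z1 \<ge> 1" using that z1pos by (auto simp: R_def field_simps)
    have lg: "log 2 (real p / z1) \<ge> 0" using p1 by simp
    have jl: "real (j p) \<le> log 2 (real p / z1)" "log 2 (real p / z1) < real (j p) + 1"
      unfolding j_def using lg by linarith+
    have "2 ^ j p = 2 powr real (j p)" by (simp add: powr_realpow)
    also have "\<dots> \<le> 2 powr log 2 (real p / z1)" using jl by (intro powr_mono) auto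
    also have "\<dots> = real p / z1" using p1 by simp
    finally have a: "2 ^ j p \<le> real p / z1" .
    have "real p / z1 = 2 powr log 2 (real p / z1)" using p1 by simp
    also have "\<dots> < 2 powr (real (j p) + 1)" using jl by (intro powr_less_mono) auto
    also have "\<dots> = 2 * 2 ^ j p" by (simp add: powr_add powr_realpow)
    finally have b: "real p / z1 < 2 * 2 ^ j p" .
    show ?thesis using a b z1pos by (simp add: field_simps)
  qed
  have jJ: "j p \<in> {..J}" if "p \<in> R" for p
  proof -
    have "real p / z1 \<le> z2 / z1" using that z1pos by (auto simp: R_def divide_right_mono)
    moreover have "real p / z1 > 0" using that z1pos by (auto simp: R_def)
    ultimately have "log 2 (real p / z1) \<le> log 2 (z2 / z1)" by simp
    then show ?thesis unfolding j_def J_def by (simp add: floor_mono nat_mono)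
  qed
  have "(\<Sum>p\<in>R. 1 / real p) = (\<Sum>i\<in>{..J}. \<Sum>p\<in>{p\<in>R. j p = i}. 1 / real p)"
    by (rule sum.group[symmetric]) (use finR jJ in auto)
  also have "\<dots> \<le> (\<Sum>i\<in>{..J}. 2 * ln 4 / ln z1)"
  proof (rule sum_mono)
    fix i assume "i \<in> {..J}"
    define y where "y = z1 * 2 ^ i"
    have y2: "y \<ge> 2" "y \<ge> z1" unfolding y_def using z by (auto simp: one_le_power order.trans[OF _ mult_left_mono[of 1 "2^i"]])
    have "(\<Sum>p\<in>{p\<in>R. j p = i}. 1 / real p) \<le> (\<Sum>p\<in>{p. prime p \<and> y \<le> real p \<and> real p < 2*y}. 1 / real p)"
    proof (rule sum_mono2)
      show "finite {p. prime p \<and> y \<le> real p \<and> real p < 2*y}"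
        by (rule finite_subset[of _ "{..nat \<lceil>2*y\<rceil>}"]) (auto simp: le_nat_iff le_ceiling_iff)
      show "{p\<in>R. j p = i} \<subseteq> {p. prime p \<and> y \<le> real p \<and> real p < 2*y}"
        using blk unfolding y_def by (auto simp: R_def)
    qed auto
    also have "\<dots> \<le> 2 * ln 4 / ln y" by (rule prime_block) (use y2 in auto)
    also have "\<dots> \<le> 2 * ln 4 / ln z1" using y2 z
      by (intro divide_left_mono mult_pos_pos) auto
    finally show "(\<Sum>p\<in>{p\<in>R. j p = i}. 1 / real p) \<le> 2 * ln 4 / ln z1" .
  qed
  also have "\<dots> = (real J + 1) * (2 * ln 4 / ln z1)" by simp
  also have "\<dots> \<le> (log 2 (z2 / z1) + 1) * (2 * ln 4 / ln z1)"
  proof (rule mult_right_mono)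
    have "log 2 (z2 / z1) \<ge> 0" using z z1pos by simp
    then show "real J + 1 \<le> log 2 (z2 / z1) + 1" unfolding J_def by linarith
    show "0 \<le> 2 * ln 4 / ln z1" using z by auto
  qed
  finally show ?thesis unfolding R_def by (simp add: mult.commute)
qed



lemma key:
  fixes \<epsilon> x w :: real
  assumes e: "0 < \<epsilon>" "\<epsilon> < 4/5" and x: "x \<ge> 0" and w: "w > 1" and z13: "w powr (1-\<epsilon>) > 3"
    and big: "100 / ln w \<le> \<epsilon>" and err: "(w^2+1) * 4 powr w \<le> \<epsilon> * x / ln w"
  shows "(\<Sum>r\<in>{r::nat. prime r \<and> w powr (1-\<epsilon>) \<le> real r \<and> real r \<le> w powr (1+\<epsilon>)}. real (A r x))
         \<le> 202 * (\<epsilon> * x / ln w)"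
proof -
  define z1 where "z1 = w powr (1-\<epsilon>)"
  define z2 where "z2 = w powr (1+\<epsilon>)"
  define L where "L = ln w"
  define R where "R = {r::nat. prime r \<and> z1 \<le> real r \<and> real r \<le> z2}"
  have L0: "L > 0" using w by (simp add: L_def)
  have z1: "z1 > 3" using z13 by (simp add: z1_def)
  have z12: "z1 \<le> z2" unfolding z1_def z2_def using w e by (intro powr_mono) auto
  have z1w: "z1 \<le> w" unfolding z1_def using w e powr_mono[of "1-\<epsilon>" 1 w] by auto
  have z2w: "z2 \<le> w^2" unfolding z2_def using w e powr_mono[of "1+\<epsilon>" 2 w] by (auto simp: powr_realpow)
  have lnz1: "ln z1 = (1-\<epsilon>) * L" unfolding z1_def L_def using w by (simp add: ln_powr)
  have lnz2: "ln z2 = (1+\<epsilon>) * L" unfolding z2_def L_def using w by (simp add: ln_powr)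
  define N where "N = nat \<lceil>z1\<rceil> - 1"
  have Nz: "real N < z1" "z1 \<le> real N + 1" "N \<ge> 3"
  proof -
    have c: "\<lceil>z1\<rceil> \<ge> 4" using z1 by (simp add: le_ceiling_iff)
    have c1: "nat \<lceil>z1\<rceil> \<ge> 1" using c by linarith
    have c2: "real (nat \<lceil>z1\<rceil>) = of_int \<lceil>z1\<rceil>" using c by simp
    have "real N = real (nat \<lceil>z1\<rceil>) - 1" unfolding N_def using c1 by (simp add: of_nat_diff)
    then have "real N = of_int \<lceil>z1\<rceil> - 1" using c2 by simp
    moreover have "of_int \<lceil>z1\<rceil> - 1 < z1" "z1 \<le> of_int \<lceil>z1\<rceil>" by linarith+
    ultimately show "real N < z1" "z1 \<le> real N + 1" by auto
    show "N \<ge> 3" using c unfolding N_def by linarith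
  qed
  define Q where "Q = {q::nat. prime q \<and> q \<noteq> 2 \<and> q \<le> N}"
  define M where "M = \<Prod>Q"
  have finQ: "finite Q" unfolding Q_def by auto
  have Qp: "prime q \<and> q \<ge> 3" if "q \<in> Q" for q
    using that prime_ge_2_nat[of q] by (auto simp: Q_def)
  have 3: "3 \<in> Q" using Nz by (auto simp: Q_def)
  have Mpos: "M > 0" unfolding M_def using Qp by (intro prod_pos) fastforce
  have "3 dvd M" unfolding M_def using 3 finQ by (intro dvd_prodI)
  then have M1: "M > 1" using Mpos by (metis dvd_imp_le le_trans numeral_le_one_iff semiring_norm(70) not_le le_less)
  define \<rho> where "\<rho> = real (totient M) / real M"
  have totM: "totient M = (\<Prod>q\<in>Q. q - 1)"
  proof -
    have "totient M = (\<Prod>q\<in>Q. totient (id q))" unfolding M_def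
      using totient_prod_coprime[of id Q] Qp by (simp add: pairwise_def primes_coprime)
    also have "\<dots> = (\<Prod>q\<in>Q. q - 1)" using Qp by (intro prod.cong refl) (simp add: totient_prime)
    finally show ?thesis .
  qed
  have rho: "\<rho> = (\<Prod>q\<in>Q. 1 - 1 / real q)"
  proof -
    have t: "real (totient M) = (\<Prod>q\<in>Q. real q - 1)" unfolding totM of_nat_prod
    proof (intro prod.cong refl)
      fix q assume "q \<in> Q"
      then have "q \<ge> 1" using Qp by fastforce
      then show "real (q - 1) = real q - 1" by (simp add: of_nat_diff)
    qed
    have m: "real M = (\<Prod>q\<in>Q. real q)" by (simp add: M_def)
    have "\<rho> = (\<Prod>q\<in>Q. real q - 1) / (\<Prod>q\<in>Q. real q)" unfolding \<rho>_def t m ..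
    also have "\<dots> = (\<Prod>q\<in>Q. (real q - 1) / real q)" by (simp add: prod_dividef)
    also have "\<dots> = (\<Prod>q\<in>Q. 1 - 1 / real q)"
    proof (intro prod.cong refl)
      fix q assume "q \<in> Q"
      then have "real q > 0" using Qp by fastforce
      then show "(real q - 1) / real q = 1 - 1 / real q" by (simp add: field_simps)
    qed
    finally show ?thesis .
  qed
  have rho0: "\<rho> \<ge> 0" unfolding \<rho>_def by simp
  have rhob: "\<rho> \<le> 2 / ln z1"
  proof -
    have ins: "{p. prime p \<and> p \<le> N} = insert 2 Q" using Nz by (auto simp: Q_def)
    have "(\<Prod>p\<in>{p. prime p \<and> p \<le> N}. (1 - 1/real p)) = (1 - 1/2) * \<rho>"
      unfolding ins rho using finQ by (subst prod.insert) (auto simp: Q_def)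
    then have "\<rho> = 2 * (\<Prod>p\<in>{p. prime p \<and> p \<le> N}. (1 - 1/real p))" by simp
    also have "\<dots> \<le> 2 * (1 / ln (real N + 1))" using Nz by (intro mult_left_mono euler_prod_bound) auto
    also have "\<dots> \<le> 2 / ln z1" using Nz z1 by (simp add: divide_left_mono)
    finally show ?thesis .
  qed
  have Ab: "real (A r x) \<le> x / (2*r) * \<rho> + totient M" if "r \<in> R" for r
  proof -
    have r: "prime r" "z1 \<le> real r" using that by (auto simp: R_def)
    have "real r > 3" using r z1 by linarith
    show ?thesis unfolding \<rho>_def
    proof (rule A_bound[OF r(1) _ finQ _ M_def M1 x])
      show "3 \<le> r" using \<open>real r > 3\<close> by simp
      fix q assume q: "q \<in> Q"
      have "real q < real r" using q Nz r by (auto simp: Q_def)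
      then show "prime q \<and> odd q \<and> q < r" using Qp[OF q] prime_odd_nat[of q] by auto
    qed
  qed
  have finR: "finite R" unfolding R_def
    by (rule finite_subset[of _ "{..nat \<lfloor>z2\<rfloor>}"]) (auto simp: le_nat_iff le_floor_iff)
  have cardR: "real (card R) \<le> z2 + 1"
  proof -
    have "card R \<le> card {..nat \<lfloor>z2\<rfloor>}" unfolding R_def
      by (rule card_mono) (auto simp: le_nat_iff le_floor_iff)
    then have "real (card R) \<le> real (nat \<lfloor>z2\<rfloor>) + 1" by simp
    also have "\<dots> \<le> z2 + 1" using z1 z12 by linarith
    finally show ?thesis .
  qed
  have Mb: "real M \<le> 4 powr w"
  proof -
    have "M dvd (\<Prod>p\<in>{p. prime p \<and> p \<le> N}. p)" unfolding M_def
      by (rule prod_dvd_prod_subset) (auto simp: Q_def)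
    then have "M \<le> (\<Prod>p\<in>{p. prime p \<and> p \<le> N}. p)" by (rule dvd_imp_le) (auto intro: prod_pos simp: prime_gt_0_nat)
    also have "\<dots> \<le> 4 ^ N" by (rule primorial_le)
    finally have "real M \<le> 4 ^ N" by (simp add: of_nat_le_iff[symmetric] del: of_nat_prod)
    also have "(4::real) ^ N = 4 powr real N" by (simp add: powr_realpow)
    also have "\<dots> \<le> 4 powr w" using Nz z1w by (intro powr_mono) auto
    finally show ?thesis .
  qed
  have S: "(\<Sum>r\<in>R. 1 / real r) \<le> 2 * ln 4 / ln z1 * (log 2 (z2 / z1) + 1)"
    unfolding R_def using z1 z12 by (intro prime_range_sum) auto
  have lg: "log 2 (z2 / z1) = 2 * \<epsilon> * L / ln 2"
    using z1 z12 lnz1 lnz2 by (simp add: log_def ln_div algebra_simps)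
  have "(\<Sum>r\<in>R. real (A r x)) \<le> (\<Sum>r\<in>R. x / (2*r) * \<rho> + totient M)"
    by (rule sum_mono) (rule Ab)
  also have "\<dots> = (x * \<rho> / 2) * (\<Sum>r\<in>R. 1 / real r) + real (card R) * real (totient M)"
    by (simp add: sum.distrib sum_distrib_left)
  also have "\<dots> \<le> (x * \<rho> / 2) * (2 * ln 4 / ln z1 * (log 2 (z2 / z1) + 1)) + (w^2+1) * 4 powr w"
  proof (rule add_mono)
    show "(x * \<rho> / 2) * (\<Sum>r\<in>R. 1 / real r) \<le> (x * \<rho> / 2) * (2 * ln 4 / ln z1 * (log 2 (z2 / z1) + 1))"
      using S x rho0 by (intro mult_left_mono) auto
    have "real (totient M) \<le> real M" by (simp add: totient_le)
    then have "real (card R) * real (totient M) \<le> (z2 + 1) * (4 powr w)"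
      using cardR Mb by (intro mult_mono) auto
    also have "\<dots> \<le> (w^2+1) * 4 powr w" using z2w by (intro mult_right_mono) auto
    finally show "real (card R) * real (totient M) \<le> (w^2+1) * 4 powr w" .
  qed
  also have "(x * \<rho> / 2) * (2 * ln 4 / ln z1 * (log 2 (z2 / z1) + 1)) \<le> 201 * (\<epsilon> * x / L)"
  proof -
    have a: "1 - \<epsilon> > 1/5" using e by simp
    have lz: "ln z1 > 0" using z1 by simp
    have ln4: "ln (4::real) = 2 * ln 2" using ln_realpow[of 2 2] by simp
    have ln2: "ln (2::real) \<le> 1" "ln (2::real) > 0" using ln_le_minus_one[of 2] by auto
    have "(x * \<rho> / 2) * (2 * ln 4 / ln z1 * (log 2 (z2 / z1) + 1)) \<le> (x * (2 / ln z1) / 2) * (2 * ln 4 / ln z1 * (log 2 (z2 / z1) + 1))"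
      using rhob x lz ln2 e L0 lg by (intro mult_right_mono mult_left_mono divide_right_mono) (auto simp: ln4)
    also have "\<dots> = x * (8 * \<epsilon> * L + 4 * ln 2) / ((1-\<epsilon>)^2 * L^2)"
    proof -
      have ne: "1 - \<epsilon> \<noteq> 0" "L \<noteq> 0" "ln 2 \<noteq> (0::real)" using e L0 ln2 by auto
      have lz0: "ln z1 \<noteq> 0" using lz by simp
      have "(x * (2 / ln z1) / 2) * (2 * (2 * ln 2) / ln z1 * (2 * \<epsilon> * L / ln 2 + 1))
            = x * (8 * \<epsilon> * L + 4 * ln 2) / (ln z1)^2"
        using lz0 ne(3) by (simp add: field_simps power2_eq_square)
      also have "(ln z1)^2 = (1-\<epsilon>)^2 * L^2" unfolding lnz1 by (simp add: power_mult_distrib)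
      finally show ?thesis unfolding lg ln4 .
    qed
    also have "\<dots> \<le> x * (8 * \<epsilon> * L + 4 * ln 2) / ((1/5)^2 * L^2)"
      using a x ln2 e L0 by (intro divide_left_mono mult_right_mono power_mono mult_nonneg_nonneg mult_pos_pos) auto
    also have "\<dots> = 200 * (\<epsilon> * x / L) + x * (100 * ln 2) / L^2"
      using L0 by (simp add: field_simps power2_eq_square)
    also have "x * (100 * ln 2) / L^2 \<le> \<epsilon> * x / L"
    proof -
      have "100 / L \<le> \<epsilon>" using big by (simp add: L_def)
      then have "100 \<le> \<epsilon> * L" using L0 by (simp add: field_simps)
      then have "x * (100 * ln 2) \<le> x * (\<epsilon> * L)" using x ln2 by (intro mult_left_mono) auto
      then show ?thesis using L0 by (simp add: field_simps power2_eq_square)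
    qed
    finally show ?thesis by simp
  qed
  finally have "(\<Sum>r\<in>R. real (A r x)) \<le> 201 * (\<epsilon> * x / L) + (w^2+1) * 4 powr w" by simp
  also have "\<dots> \<le> 202 * (\<epsilon> * x / L)" using err by (simp add: L_def)
  finally show ?thesis unfolding R_def z1_def z2_def L_def .
qed


theorem lemma4p2:
  shows "\<exists>c::real. \<forall>\<epsilon>::real. 0 < \<epsilon> \<and> \<epsilon> < 4/5 \<longrightarrow>
    (\<forall>\<^sub>F x in at_top.
       (\<Sum>r\<in>{r::nat. prime r \<and> ln (ln x) powr (1 - \<epsilon>) \<le> real r \<and>
                        real r \<le> ln (ln x) powr (1 + \<epsilon>)}. real (A r x))
       \<le> c * (\<epsilon> * x / ln (ln (ln x))))"
proof (intro exI[of _ 202] allI impI)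
  fix \<epsilon> :: real assume e: "0 < \<epsilon> \<and> \<epsilon> < 4/5"
  define f where "f = (\<lambda>x::real. (ln (ln x)^2+1) * 4 powr (ln (ln x)) * ln (ln (ln x)) / x)"
  have flim: "(f \<longlongrightarrow> 0) at_top" unfolding f_def by real_asymp
  have ev5: "eventually (\<lambda>x. f x < \<epsilon>) at_top" using order_tendstoD(2)[OF flim] e by auto
  have ev1: "eventually (\<lambda>x::real. x > 0) at_top" by real_asymp
  have ev2: "eventually (\<lambda>x::real. ln (ln x) > 1) at_top" by real_asymp
  have ev3: "eventually (\<lambda>x::real. ln (ln x) powr (1/5) > 3) at_top" by real_asymp
  have lim4: "filterlim (\<lambda>x::real. ln (ln (ln x))) at_top at_top" by real_asymp
  have ev4: "eventually (\<lambda>x::real. ln (ln (ln x)) \<ge> 100/\<epsilon>) at_top"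
    using lim4 by (simp add: filterlim_at_top)
  show "\<forall>\<^sub>F x in at_top.
       (\<Sum>r\<in>{r::nat. prime r \<and> ln (ln x) powr (1 - \<epsilon>) \<le> real r \<and>
                        real r \<le> ln (ln x) powr (1 + \<epsilon>)}. real (A r x))
       \<le> 202 * (\<epsilon> * x / ln (ln (ln x)))"
    using ev1 ev2 ev3 ev4 ev5
  proof eventually_elim
    case (elim x)
    define w where "w = ln (ln x)"
    have w: "w > 1" using elim by (simp add: w_def)
    have Lpos: "ln w > 0" using w by simp
    have "w powr (1/5) \<le> w powr (1 - \<epsilon>)" using w e by (intro powr_mono) auto
    moreover have "3 < w powr (1/5)" using elim by (simp add: w_def)
    ultimately have z13: "w powr (1-\<epsilon>) > 3" by linarith
    have big: "100 / ln w \<le> \<epsilon>" using elim Lpos e by (simp add: w_def field_simps)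
    have "(w^2+1) * 4 powr w * ln w / x < \<epsilon>" using elim by (simp add: f_def w_def)
    then have "(w^2+1) * 4 powr w * ln w < \<epsilon> * x" using elim by (simp add: field_simps)
    then have err: "(w^2+1) * 4 powr w \<le> \<epsilon> * x / ln w" using Lpos by (simp add: field_simps)
    show ?case using key[OF conjunct1[OF e] conjunct2[OF e] _ w z13 big err] elim
      unfolding w_def by simp
  qed
qed

end
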